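(* Let $a\in\mathbb{R}^n$, $\mathcal{B}\subseteq\mathbb{R}^n$, and $\mathcal{M}=\{\mathrm{Sym}(ab^\top): b\in\mathcal{B}\}$. Then for every positive semidefinite $X\in\mathbb{S}^n_+$ of rank at least two, $\mathrm{range}(X)\cap\mathcal{N}(\mathcal{M})\neq\{0\}$. In particular, $\mathcal{S}(\mathcal{M})$ is rank-one generated.
   Context: $\mathbb{S}^n$ is the space of real symmetric $n\times n$ matrices with $\langle A,B\rangle=\mathrm{tr}(AB)$; $\mathbb{S}^n_+$ is the PSD cone; $\mathrm{Sym}(M)=(M+M^\top)/2$. For $\mathcal{M}\subseteq\mathbb{S}^n$: $\mathcal{S}(\mathcal{M})=\{X\in\mathbb{S}^n_+:\langle M,X\rangle\ge0\ \forall M\in\mathcal{M}\}$ and $\mathcal{N}(\mathcal{M})=\{x\in\mathbb{R}^n: x^\top Mx=0\ \forall M\in\mathcal{M}\}$. A closed convex cone $\mathcal{S}\subseteq\mathbb{S}^n_+$ is rank-one generated (ROG) if $\mathcal{S}=\mathrm{conv}(\mathcal{S}\cap\{xx^\top:x\in\mathbb{R}^n\})$. *)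

theory Defs
  imports "HOL-Analysis.Analysis"
begin

definition sym_mat :: "real^'n^'n \<Rightarrow> bool" where
  "sym_mat X \<longleftrightarrow> transpose X = X"

definition mat_inner :: "real^'n^'n \<Rightarrow> real^'n^'n \<Rightarrow> real" where
  "mat_inner A B = (\<Sum>i\<in>UNIV. (A ** B) $ i $ i)"

definition psd_cone :: "(real^'n^'n) set" where
  "psd_cone = {X. sym_mat X \<and> (\<forall>x. x \<bullet> (X *v x) \<ge> 0)}"

definition outer :: "real^'n \<Rightarrow> real^'n \<Rightarrow> real^'n^'n" where
  "outer a b = (\<chi> i j. a $ i * b $ j)"

definition Sym :: "real^'n^'n \<Rightarrow> real^'n^'n" where
  "Sym M = (1/2) *\<^sub>R (M + transpose M)"

definition S_of :: "(real^'n^'n) set \<Rightarrow> (real^'n^'n) set" where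
  "S_of \<M> = {X \<in> psd_cone. \<forall>M\<in>\<M>. mat_inner M X \<ge> 0}"

definition N_of :: "(real^'n^'n) set \<Rightarrow> (real^'n) set" where
  "N_of \<M> = {x. \<forall>M\<in>\<M>. x \<bullet> (M *v x) = 0}"

definition ROG :: "(real^'n^'n) set \<Rightarrow> bool" where
  "ROG S \<longleftrightarrow> closed S \<and> convex_cone S \<and> S \<subseteq> psd_cone \<and>
     S = convex hull (S \<inter> range (\<lambda>x. outer x x))"

end

theory Submission
  imports Defs
begin

lemma outer_mulv: "outer a b *v x = (b \<bullet> x) *\<^sub>R a"
  by (simp add: vec_eq_iff matrix_vector_mult_def outer_def inner_vec_def sum_distrib_left mult_ac)

lemma transpose_outer: "transpose (outer a b) = outer b a"
  by (simp add: vec_eq_iff transpose_def outer_def)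

lemma Sym_mulv: "Sym M *v x = (1/2) *\<^sub>R (M *v x + transpose M *v x)"
  unfolding Sym_def by (simp add: vec_eq_iff matrix_vector_mult_def sum.distrib sum_distrib_left algebra_simps transpose_def)

lemma quad_Sym_outer: "x \<bullet> (Sym (outer a b) *v x) = (a \<bullet> x) * (b \<bullet> x)"
  by (simp add: Sym_mulv transpose_outer outer_mulv inner_add_right inner_commute)

lemma mat_inner_sum: "mat_inner M X = (\<Sum>i\<in>UNIV. \<Sum>k\<in>UNIV. M$i$k * X$k$i)"
  by (simp add: mat_inner_def matrix_matrix_mult_def)

lemma mat_inner_linear: "linear (mat_inner M)"
  by (rule linearI) (simp_all add: mat_inner_sum algebra_simps sum.distrib sum_distrib_left)

lemma mat_inner_outer: "mat_inner M (outer x x) = x \<bullet> (M *v x)"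
  by (simp add: mat_inner_sum outer_def inner_vec_def matrix_vector_mult_def sum_distrib_left mult_ac)

lemma quad_linear: "linear (\<lambda>X. x \<bullet> (X *v (x::real^'n)))"
  by (rule linearI) (simp_all add: inner_vec_def matrix_vector_mult_def sum.distrib sum_distrib_left algebra_simps)

lemma sym_inner: "sym_mat X \<Longrightarrow> (X *v u) \<bullet> v = u \<bullet> (X *v v)"
  unfolding sym_mat_def by (metis dot_lmul_matrix inner_commute transpose_matrix_vector)


lemma quad_expand:
  assumes "sym_mat X"
  shows "(u + t *\<^sub>R v) \<bullet> (X *v (u + t *\<^sub>R v)) = u \<bullet> (X *v u) + 2 * t * (u \<bullet> (X *v v)) + t^2 * (v \<bullet> (X *v v))"
proof -
  have s: "v \<bullet> (X *v u) = u \<bullet> (X *v v)"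
    using sym_inner[OF assms, of v u] by (simp add: inner_commute)
  show ?thesis
    by (simp add: matrix_vector_right_distrib matrix_vector_mult_scaleR inner_add_left inner_add_right s power2_eq_square algebra_simps)
qed

lemma psd_pos:
  assumes X: "X \<in> psd_cone" and nz: "X *v y \<noteq> 0"
  shows "y \<bullet> (X *v y) > 0"
proof (rule ccontr)
  assume "\<not> ?thesis"
  moreover have "y \<bullet> (X *v y) \<ge> 0" using X by (simp add: psd_cone_def)
  ultimately have q0: "y \<bullet> (X *v y) = 0" by simp
  define x where "x = X *v y"
  define p where "p = x \<bullet> x"
  define c where "c = x \<bullet> (X *v x)"
  have p: "p > 0" using nz by (simp add: p_def x_def)
  have c: "c \<ge> 0" using X by (simp add: psd_cone_def c_def)
  have sym: "sym_mat X" using X by (simp add: psd_cone_def)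
  define t where "t = - p / (c + 1)"
  have "(y + t *\<^sub>R x) \<bullet> (X *v (y + t *\<^sub>R x)) \<ge> 0" using X by (simp add: psd_cone_def)
  also have "(y + t *\<^sub>R x) \<bullet> (X *v (y + t *\<^sub>R x)) = 2 * t * (y \<bullet> (X *v x)) + t^2 * c"
    using quad_expand[OF sym, of y t x] q0 by (simp add: c_def)
  finally have "0 \<le> 2 * t * (y \<bullet> (X *v x)) + t^2 * c" .
  moreover have "y \<bullet> (X *v x) = p"
    using sym_inner[OF sym, of y x] by (simp add: p_def x_def)
  ultimately have "0 \<le> 2 * t * p + t^2 * c" by simp
  moreover have "2 * t * p + t^2 * c = p*p * (- c - 2) / ((c+1)*(c+1))"
  proof -
    have "c + 1 \<noteq> 0" using c by simp
    then show ?thesis unfolding t_def power2_eq_square by (simp add: divide_simps) (simp add: algebra_simps)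
  qed
  moreover have "p*p * (- c - 2) / ((c+1)*(c+1)) < 0"
    using c p by (intro divide_neg_pos mult_pos_neg) auto
  ultimately show False by linarith
qed

lemma cs_psd:
  assumes X: "X \<in> psd_cone" and q: "y \<bullet> (X *v y) > 0"
  shows "(z \<bullet> (X *v y))^2 / (y \<bullet> (X *v y)) \<le> z \<bullet> (X *v z)"
proof -
  have sym: "sym_mat X" using X by (simp add: psd_cone_def)
  define q where "q = y \<bullet> (X *v y)"
  define r where "r = z \<bullet> (X *v y)"
  define t where "t = - r / q"
  have "(z + t *\<^sub>R y) \<bullet> (X *v (z + t *\<^sub>R y)) \<ge> 0" using X by (simp add: psd_cone_def)
  also have "(z + t *\<^sub>R y) \<bullet> (X *v (z + t *\<^sub>R y)) = z \<bullet> (X *v z) - r^2 / q"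
    using quad_expand[OF sym, of z t y] q by (simp add: q_def r_def t_def field_simps power2_eq_square)
  finally show ?thesis by (simp add: q_def r_def)
qed


lemma scaleR_mat_mulv: "(c *\<^sub>R (A::real^'n^'m)) *v z = c *\<^sub>R (A *v z)"
  by (simp add: scaleR_matrix_vector_assoc)

lemma range_subspace: "subspace (range (\<lambda>x. (A::real^'n^'m) *v x))"
  using linear_subspace_image[OF Finite_Cartesian_Product.matrix_vector_mul_linear[of A] subspace_UNIV] by simp

lemma deflate:
  assumes X: "X \<in> psd_cone" and nz: "X *v y \<noteq> 0"
  defines "x \<equiv> X *v y" and "q \<equiv> y \<bullet> (X *v y)"
  defines "X' \<equiv> X - (1/q) *\<^sub>R outer x x"
  shows "X' \<in> psd_cone" "X = X' + (1/q) *\<^sub>R outer x x" "q > 0"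
        "dim (range (\<lambda>z. X' *v z)) < dim (range (\<lambda>z. X *v z))"
proof -
  have q: "q > 0" using psd_pos[OF X nz] by (simp add: q_def)
  then show "q > 0" .
  have sym: "sym_mat X" using X by (simp add: psd_cone_def)
  have Xv: "X' *v z = X *v z - ((x \<bullet> z) / q) *\<^sub>R x" for z
    by (simp add: X'_def matrix_vector_mult_diff_rdistrib scaleR_mat_mulv outer_mulv)
  have symX': "sym_mat X'"
  proof -
    have "X $ j $ i = X $ i $ j" for i j
      using sym unfolding sym_mat_def by (metis transpose_def vec_lambda_beta)
    then show ?thesis
      by (simp add: sym_mat_def X'_def vec_eq_iff transpose_def outer_def mult.commute)
  qed
  have "z \<bullet> (X' *v z) \<ge> 0" for z
  proof -
    have "z \<bullet> (X' *v z) = z \<bullet> (X *v z) - (z \<bullet> (X *v y))^2 / q"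
      by (simp add: Xv inner_diff_right x_def power2_eq_square inner_commute)
    then show ?thesis using cs_psd[OF X, of y z] q by (simp add: q_def)
  qed
  with symX' show "X' \<in> psd_cone" by (simp add: psd_cone_def)
  show "X = X' + (1/q) *\<^sub>R outer x x" by (simp add: X'_def)
  have sub: "range (\<lambda>z. X' *v z) \<subseteq> range (\<lambda>z. X *v z)"
  proof
    fix v assume "v \<in> range (\<lambda>z. X' *v z)"
    then obtain z where v: "v = X' *v z" by auto
    have "v = X *v (z - ((x \<bullet> z) / q) *\<^sub>R y)"
      by (simp add: v Xv matrix_vector_mult_diff_distrib matrix_vector_mult_scaleR x_def)
    then show "v \<in> range (\<lambda>z. X *v z)" by blast
  qed
  have notin: "x \<notin> range (\<lambda>z. X' *v z)"
  proof
    assume "x \<in> range (\<lambda>z. X' *v z)"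
    then obtain w where w: "x = X' *v w" by auto
    have "X' *v y = 0" using q by (simp add: Xv x_def q_def inner_commute)
    then have "(X' *v y) \<bullet> w = 0" by simp
    then have "y \<bullet> x = 0" using sym_inner[OF symX', of y w] w by simp
    then show False using q by (simp add: x_def q_def)
  qed
  have "range (\<lambda>z. X' *v z) \<subset> range (\<lambda>z. X *v z)"
    using sub notin by (auto simp: x_def)
  then show "dim (range (\<lambda>z. X' *v z)) < dim (range (\<lambda>z. X *v z))"
  proof -
    have "span (range (\<lambda>z. X' *v z)) = range (\<lambda>z. X' *v z)" "span (range (\<lambda>z. X *v z)) = range (\<lambda>z. X *v z)"
      using range_subspace[of X] range_subspace[of X'] span_eq_iff by blast+
    then show ?thesis using \<open>range (\<lambda>z. X' *v z) \<subset> range (\<lambda>z. X *v z)\<close> dim_psubset by metis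
  qed
qed


lemma part1:
  fixes X :: "real^'n^'n" and a :: "real^'n"
  assumes "rank X \<ge> 2"
  shows "\<exists>v\<in>range (\<lambda>x. X *v x). v \<noteq> 0 \<and> a \<bullet> v = 0"
proof (rule ccontr)
  assume H: "\<not> ?thesis"
  let ?R = "range (\<lambda>x. X *v x)"
  let ?f = "\<lambda>v. a \<bullet> v"
  have lin: "linear ?f" by (simp add: linearI inner_add_right)
  have sR: "span ?R = ?R" using range_subspace[of X] span_eq_iff by blast
  have "inj_on ?f (span ?R)"
  proof (rule inj_onI)
    fix u w assume u: "u \<in> span ?R" and w: "w \<in> span ?R" and e: "a \<bullet> u = a \<bullet> w"
    have "u - w \<in> ?R" using u w sR range_subspace[of X]
      by (metis subspace_diff)
    moreover have "a \<bullet> (u - w) = 0" using e by (simp add: inner_diff_right)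
    ultimately have "u - w = 0" using H by blast
    then show "u = w" by simp
  qed
  then have "dim (?f ` ?R) = dim ?R" using eucl.dim_image_eq[OF lin] by blast
  moreover have "dim (?f ` ?R) \<le> 1"
    using dim_subset_UNIV[of "?f ` ?R"] by simp
  ultimately have "dim ?R \<le> 1" by simp
  then show False using assms by (simp add: rank_dim_range)
qed


lemma sym_mat_add: "sym_mat X \<Longrightarrow> sym_mat Y \<Longrightarrow> sym_mat (X + Y)"
  by (simp add: sym_mat_def vec_eq_iff transpose_def)

lemma sym_mat_scale: "sym_mat X \<Longrightarrow> sym_mat (c *\<^sub>R X)"
  by (simp add: sym_mat_def transpose_scalar)

lemma outer_psd: "outer x x \<in> psd_cone"
  by (simp add: psd_cone_def sym_mat_def transpose_outer outer_mulv inner_commute)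

lemma outer_scale: "outer (c *\<^sub>R x) (c *\<^sub>R x) = (c * c) *\<^sub>R outer x x"
  by (simp add: outer_def vec_eq_iff mult_ac)

lemma closed_psd: "closed (psd_cone :: (real^'n^'n) set)"
proof -
  have eq: "psd_cone = {X::real^'n^'n. transpose X - X = 0} \<inter> (\<Inter>x. {X. 0 \<le> x \<bullet> (X *v x)})"
    by (auto simp: psd_cone_def sym_mat_def)
  have c1: "closed {X::real^'n^'n. transpose X - X = 0}"
  proof (rule closed_subspace)
    show "subspace {X::real^'n^'n. transpose X - X = 0}"
      by (auto simp: subspace_def vec_eq_iff transpose_def algebra_simps)
  qed
  have c2: "closed {X::real^'n^'n. 0 \<le> x \<bullet> (X *v x)}" for x
    using quad_linear[of x] by (intro closed_Collect_le continuous_on_const linear_continuous_on)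
       (simp add: linear_conv_bounded_linear)
  show ?thesis unfolding eq using c1 c2 by (intro closed_Int closed_INT) auto
qed

lemma S_of_closed: "closed (S_of \<M>)"
proof -
  have eq: "S_of \<M> = psd_cone \<inter> (\<Inter>M\<in>\<M>. {X. 0 \<le> mat_inner M X})"
    by (auto simp: S_of_def)
  have c: "closed {X::real^'n^'n. 0 \<le> mat_inner M X}" for M
    using mat_inner_linear[of M] by (intro closed_Collect_le continuous_on_const linear_continuous_on)
       (simp add: linear_conv_bounded_linear)
  show ?thesis unfolding eq using c closed_psd by (intro closed_Int closed_INT) auto
qed

lemma S_of_cone: "convex_cone (S_of \<M>)"
  unfolding convex_cone_iff
proof (intro conjI ballI allI impI)
  show "0 \<in> S_of \<M>"
    by (simp add: S_of_def psd_cone_def sym_mat_def mat_inner_def vec_eq_iff transpose_def)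
  fix X Y assume X: "X \<in> S_of \<M>" and Y: "Y \<in> S_of \<M>"
  have sx: "sym_mat X" "sym_mat Y" using X Y by (auto simp: S_of_def psd_cone_def)
  have qx: "0 \<le> x \<bullet> (X *v x)" "0 \<le> x \<bullet> (Y *v x)" for x using X Y by (auto simp: S_of_def psd_cone_def)
  have mx: "0 \<le> mat_inner M X" "0 \<le> mat_inner M Y" if "M \<in> \<M>" for M using X Y that by (auto simp: S_of_def)
  have "x \<bullet> ((X + Y) *v x) = x \<bullet> (X *v x) + x \<bullet> (Y *v x)" for x
    by (simp add: matrix_vector_mult_add_rdistrib inner_add_right)
  moreover have "mat_inner M (X + Y) = mat_inner M X + mat_inner M Y" for M
    by (rule linear_add[OF mat_inner_linear])
  ultimately show "X + Y \<in> S_of \<M>"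
    using sx qx mx by (simp add: S_of_def psd_cone_def sym_mat_add add_nonneg_nonneg)
next
  fix X and c :: real assume X: "X \<in> S_of \<M>" and c: "0 \<le> c"
  then show "c *\<^sub>R X \<in> S_of \<M>"
    by (auto simp: S_of_def psd_cone_def sym_mat_scale scaleR_mat_mulv linear_scale[OF mat_inner_linear])
qed


theorem theorem3p4:
  fixes a :: "real^'n" and \<B> :: "(real^'n) set" and \<M> :: "(real^'n^'n) set"
  assumes "\<M> = {Sym (outer a b) | b. b \<in> \<B>}"
  shows "(\<forall>X \<in> psd_cone. rank X \<ge> 2 \<longrightarrow> range (\<lambda>x. X *v x) \<inter> N_of \<M> \<noteq> {0})
         \<and> ROG (S_of \<M>)"
proof -
  have Nsub: "x \<in> N_of \<M>" if "a \<bullet> x = 0" for x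
    using that unfolding N_of_def assms by (auto simp: quad_Sym_outer)
  have P1: "\<forall>X \<in> psd_cone. rank X \<ge> 2 \<longrightarrow> range (\<lambda>x. X *v x) \<inter> N_of \<M> \<noteq> {0}"
  proof (intro ballI impI)
    fix X :: "real^'n^'n" assume "rank X \<ge> 2"
    from part1[OF this, of a] obtain v where "v \<in> range (\<lambda>x. X *v x)" "v \<noteq> 0" "a \<bullet> v = 0" by blast
    then show "range (\<lambda>x. X *v x) \<inter> N_of \<M> \<noteq> {0}" using Nsub by blast
  qed
  define S where "S = S_of \<M>"
  define R where "R = S \<inter> range (\<lambda>x. outer x x)"
  define H where "H = convex hull R"
  have cone: "convex_cone S" unfolding S_def by (rule S_of_cone)
  have S0: "0 \<in> S" and Sadd: "\<And>x y. x \<in> S \<Longrightarrow> y \<in> S \<Longrightarrow> x + y \<in> S"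
    and Sscale: "\<And>x c. x \<in> S \<Longrightarrow> 0 \<le> c \<Longrightarrow> c *\<^sub>R x \<in> S"
    using cone unfolding convex_cone_iff by auto
  have RH: "R \<subseteq> H" unfolding H_def by (rule hull_subset)
  have outerS: "outer x x \<in> S" if "x \<in> N_of \<M>" for x
    using that outer_psd[of x] by (auto simp: S_def S_of_def N_of_def mat_inner_outer)
  have Hscale: "c *\<^sub>R h \<in> H" if "h \<in> H" "0 \<le> c" for h c
  proof -
    have "(\<lambda>x. c *\<^sub>R x) ` R \<subseteq> R"
    proof
      fix z assume "z \<in> (\<lambda>x. c *\<^sub>R x) ` R"
      then obtain x where x: "outer x x \<in> S" "z = c *\<^sub>R outer x x" by (auto simp: R_def)
      have "z = outer (sqrt c *\<^sub>R x) (sqrt c *\<^sub>R x)"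
        using that(2) by (simp add: x(2) outer_scale)
      moreover have "z \<in> S" using x Sscale that(2) by simp
      ultimately show "z \<in> R" by (auto simp: R_def)
    qed
    then have "convex hull ((\<lambda>x. c *\<^sub>R x) ` R) \<subseteq> H" unfolding H_def by (rule hull_mono)
    then show ?thesis using that(1) unfolding H_def convex_hull_scaling by blast
  qed
  have Hadd: "h1 + h2 \<in> H" if "h1 \<in> H" "h2 \<in> H" for h1 h2
  proof -
    have "convex H" unfolding H_def by simp
    moreover have "2 *\<^sub>R h1 \<in> H" "2 *\<^sub>R h2 \<in> H" using Hscale that by auto
    ultimately have "(1/2) *\<^sub>R (2 *\<^sub>R h1) + (1/2) *\<^sub>R (2 *\<^sub>R h2) \<in> H"
      by (intro convexD) auto
    then show ?thesis by simp
  qed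
  have main: "X \<in> H" if "X \<in> S" for X
    using that
  proof (induction "dim (range (\<lambda>z. X *v z))" arbitrary: X rule: less_induct)
    case less
    have XS: "X \<in> S" by fact
    have Xpsd: "X \<in> psd_cone" using XS by (simp add: S_def S_of_def)
    show ?case
    proof (cases "X = 0")
      case True
      have "X = outer 0 0" using True by (simp add: outer_def vec_eq_iff)
      then have "X \<in> R" using XS by (auto simp: R_def)
      then show ?thesis using RH by blast
    next
      case False
      show ?thesis
      proof (cases "rank X \<ge> 2")
        case True
        from part1[OF True, of a] obtain y where y: "X *v y \<noteq> 0" "a \<bullet> (X *v y) = 0" by auto
        define x where "x = X *v y"
        define q where "q = y \<bullet> (X *v y)"
        define X' where "X' = X - (1/q) *\<^sub>R outer x x"
        note d = deflate[OF Xpsd y(1), folded x_def q_def, folded X'_def]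
        have xN: "x \<in> N_of \<M>" using Nsub y(2) by (simp add: x_def)
        have "X' \<in> S"
        proof -
          have "mat_inner M X' = mat_inner M X" if "M \<in> \<M>" for M
          proof -
            have "mat_inner M (outer x x) = 0" using xN that by (simp add: N_of_def mat_inner_outer)
            then show ?thesis unfolding X'_def
              by (simp add: linear_diff[OF mat_inner_linear] linear_scale[OF mat_inner_linear])
          qed
          then show ?thesis using d(1) XS by (simp add: S_def S_of_def X'_def)
        qed
        then have "X' \<in> H" using less.hyps d(4) by blast
        moreover have "(1/q) *\<^sub>R outer x x \<in> H"
          using Hscale[of "outer x x" "1/q"] RH outerS[OF xN] d(3) by (auto simp: R_def)
        ultimately show ?thesis using Hadd d(2) by metis
      next
        case False2: False
        have "rank X \<noteq> 0" using False by (simp add: rank_eq_0)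
        then have r1: "dim (range (\<lambda>z. X *v z)) = 1" using False2 unfolding rank_dim_range by linarith
        obtain y where y: "X *v y \<noteq> 0" using False by (metis matrix_eq matrix_vector_mult_0)
        define x where "x = X *v y"
        define q where "q = y \<bullet> (X *v y)"
        define X' where "X' = X - (1/q) *\<^sub>R outer x x"
        note d = deflate[OF Xpsd y(1), folded x_def q_def, folded X'_def]
        have "dim (range (\<lambda>z. X' *v z)) = 0" using d(4) r1 by simp
        then have "X' = 0" by (auto simp: matrix_eq)
        then have "X = outer (sqrt (1/q) *\<^sub>R x) (sqrt (1/q) *\<^sub>R x)"
          using d(2) d(3) by (simp add: outer_scale)
        then have "X \<in> R" using XS by (auto simp: R_def)
        then show ?thesis using RH by blast
      qed
    qed
  qed
  have "S = H"
  proof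
    show "S \<subseteq> H" using main by blast
    have "convex S" using cone by (simp add: convex_cone_def)
    moreover have "R \<subseteq> S" by (simp add: R_def)
    ultimately show "H \<subseteq> S" unfolding H_def by (rule hull_minimal[rotated])
  qed
  moreover have "closed S" unfolding S_def by (rule S_of_closed)
  moreover have "S \<subseteq> psd_cone" by (auto simp: S_def S_of_def)
  ultimately have "ROG (S_of \<M>)"
    using cone unfolding ROG_def S_def[symmetric] H_def R_def by simp
  with P1 show ?thesis by blast
qed

end
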